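(* Let $\Gamma$ be a finitely generated group and for $i=1,2$ let $\mathbb{F}_i$ be a free group on a finite basis $X_i$ and $\pi_i:\mathbb{F}_i\twoheadrightarrow\Gamma$ an epimorphism. If $\Gamma$ is stable with respect to $\pi_1$, then it is stable with respect to $\pi_2$. Moreover there exists $C_0\ge 1$ such that for all $x\ge1$: (i) if $\pi_1$ is an isomorphism then $F_\Gamma^{\pi_2}(x)\le C_0x$; (ii) if $\pi_1$ is not an isomorphism then $F_\Gamma^{\pi_2}(x)\le C_0F_\Gamma^{\pi_1}(C_0x)$.
   Context: For a finite set $\Omega$, $d_\Omega(\sigma,\tau)=|\{\omega:\sigma(\omega)\ne\tau(\omega)\}|/|\Omega|$. For an epimorphism $\pi:\mathbb{F}\twoheadrightarrow\Gamma$ from a free group on finite basis $X$ and $\epsilon>0$, a pair $(\delta,E)$ with $\delta\in(0,1]$, $E\subseteq\ker\pi$ finite, is valid for $\epsilon$ if for every finite $\Omega$ and every homomorphism $\rho:\mathbb{F}\to\mathrm{Sym}(\Omega)$ with $d_\Omega(\rho(r),\mathrm{id})<\delta$ for all $r\in E$, there is a homomorphism $\phi:\Gamma\to\mathrm{Sym}(\Omega)$ with $d_\Omega(\rho(x),\phi(\pi(x)))<\epsilon$ for all $x\in X$. $\Gamma$ is stable w.r.t. $\pi$ if valid pairs exist for all $\epsilon>0$. $F_\Gamma^\pi(x)=\inf\{\|E\|/\delta:(\delta,E)\text{ valid for }1/x\}$, where $\|E\|=\sum_{r\in E}|r|$ with word length in $X$. *)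

theory Defs
  imports Complex_Main "HOL-Algebra.Bij"
begin

text \<open>Elements of the free group on a basis X are represented by reduced words:
  lists of letters (b, x), x in X, where (True, x) stands for x and (False, x) for x^-1,
  with no adjacent pair (b,x),(\<not>b,x).\<close>

fun reduced :: "(bool \<times> 'x) list \<Rightarrow> bool" where
  "reduced [] = True"
| "reduced [_] = True"
| "reduced ((b, x) # (c, y) # w) = (\<not> (x = y \<and> b \<noteq> c) \<and> reduced ((c, y) # w))"

definition free_elems :: "'x set \<Rightarrow> (bool \<times> 'x) list set" where
  "free_elems X = {w. set (map snd w) \<subseteq> X \<and> reduced w}"

fun word_eval :: "('g, 'm) monoid_scheme \<Rightarrow> ('x \<Rightarrow> 'g) \<Rightarrow> (bool \<times> 'x) list \<Rightarrow> 'g" where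
  "word_eval G f [] = \<one>\<^bsub>G\<^esub>"
| "word_eval G f ((b, x) # w) =
     (if b then f x else inv\<^bsub>G\<^esub> (f x)) \<otimes>\<^bsub>G\<^esub> word_eval G f w"

definition is_epi :: "('g, 'm) monoid_scheme \<Rightarrow> 'x set \<Rightarrow> ('x \<Rightarrow> 'g) \<Rightarrow> bool" where
  "is_epi G X f \<longleftrightarrow> f ` X \<subseteq> carrier G \<and>
     (\<forall>g \<in> carrier G. \<exists>w \<in> free_elems X. word_eval G f w = g)"

definition is_iso :: "('g, 'm) monoid_scheme \<Rightarrow> 'x set \<Rightarrow> ('x \<Rightarrow> 'g) \<Rightarrow> bool" where
  "is_iso G X f \<longleftrightarrow> is_epi G X f \<and>
     (\<forall>w \<in> free_elems X. word_eval G f w = \<one>\<^bsub>G\<^esub> \<longrightarrow> w = [])"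

definition ker_free :: "('g, 'm) monoid_scheme \<Rightarrow> 'x set \<Rightarrow> ('x \<Rightarrow> 'g) \<Rightarrow> (bool \<times> 'x) list set" where
  "ker_free G X f = {w \<in> free_elems X. word_eval G f w = \<one>\<^bsub>G\<^esub>}"

definition dist_Om :: "'a set \<Rightarrow> ('a \<Rightarrow> 'a) \<Rightarrow> ('a \<Rightarrow> 'a) \<Rightarrow> real" where
  "dist_Om \<Omega> \<sigma> \<tau> = real (card {\<omega> \<in> \<Omega>. \<sigma> \<omega> \<noteq> \<tau> \<omega>}) / real (card \<Omega>)"

definition word_norm :: "(bool \<times> 'x) list set \<Rightarrow> nat" where
  "word_norm E = (\<Sum>r \<in> E. length r)"

text \<open>Finite sets Omega are taken as finite sets of natural numbers (every finite set
  is in bijection with one). A homomorphism rho : F(X) -> Sym(Omega) is given by an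
  assignment of permutations to the basis.\<close>
definition valid_pair :: "('g, 'm) monoid_scheme \<Rightarrow> 'x set \<Rightarrow> ('x \<Rightarrow> 'g) \<Rightarrow> real
    \<Rightarrow> real \<Rightarrow> (bool \<times> 'x) list set \<Rightarrow> bool" where
  "valid_pair G X f \<epsilon> \<delta> E \<longleftrightarrow>
     0 < \<delta> \<and> \<delta> \<le> 1 \<and> finite E \<and> E \<subseteq> ker_free G X f \<and>
     (\<forall>(\<Omega> :: nat set) (\<rho> :: 'x \<Rightarrow> nat \<Rightarrow> nat).
        finite \<Omega> \<longrightarrow> (\<forall>x \<in> X. \<rho> x \<in> Bij \<Omega>) \<longrightarrow>
        (\<forall>r \<in> E. dist_Om \<Omega> (word_eval (BijGroup \<Omega>) \<rho> r) id < \<delta>) \<longrightarrow>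
        (\<exists>\<phi> \<in> hom G (BijGroup \<Omega>). \<forall>x \<in> X. dist_Om \<Omega> (\<rho> x) (\<phi> (f x)) < \<epsilon>))"

definition stable_wrt :: "('g, 'm) monoid_scheme \<Rightarrow> 'x set \<Rightarrow> ('x \<Rightarrow> 'g) \<Rightarrow> bool" where
  "stable_wrt G X f \<longleftrightarrow> (\<forall>\<epsilon> > 0. \<exists>\<delta> E. valid_pair G X f \<epsilon> \<delta> E)"

definition stab_fun :: "('g, 'm) monoid_scheme \<Rightarrow> 'x set \<Rightarrow> ('x \<Rightarrow> 'g) \<Rightarrow> real \<Rightarrow> real" where
  "stab_fun G X f x = Inf {real (word_norm E) / \<delta> | \<delta> E. valid_pair G X f (1 / x) \<delta> E}"

end

theory Submission
  imports Defs
begin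

definition invw :: "(bool \<times> 'x) list \<Rightarrow> (bool \<times> 'x) list" where
  "invw v = rev (map (\<lambda>(b, x). (\<not> b, x)) v)"

fun cred :: "bool \<times> 'x \<Rightarrow> (bool \<times> 'x) list \<Rightarrow> (bool \<times> 'x) list" where
  "cred a [] = [a]"
| "cred (b, x) ((c, y) # v) = (if x = y \<and> b \<noteq> c then v else (b, x) # (c, y) # v)"

fun red :: "(bool \<times> 'x) list \<Rightarrow> (bool \<times> 'x) list" where
  "red [] = []"
| "red (a # w) = cred a (red w)"

definition substw :: "('a \<Rightarrow> (bool \<times> 'b) list) \<Rightarrow> (bool \<times> 'a) list \<Rightarrow> (bool \<times> 'b) list" where
  "substw s v = concat (map (\<lambda>(b, x). if b then s x else invw (s x)) v)"

lemma reduced_tl: "reduced (a # v) \<Longrightarrow> reduced v"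
  by (cases a; cases v) auto

lemma reduced_cred: "reduced v \<Longrightarrow> reduced (cred a v)"
proof (cases "(a, v)" rule: cred.cases)
  case (2 b x c y w)
  assume r: "reduced v"
  then show ?thesis using 2 by (auto dest: reduced_tl)
qed auto

lemma reduced_red: "reduced (red v)"
  by (induction v) (auto intro: reduced_cred)

lemma length_cred: "length (cred a v) \<le> Suc (length v)"
  by (cases "(a, v)" rule: cred.cases) auto

lemma length_red: "length (red v) \<le> length v"
  by (induction v) (auto intro: order_trans[OF length_cred])

lemma set_cred: "set (cred a v) \<subseteq> insert a (set v)"
  by (cases "(a, v)" rule: cred.cases) auto

lemma set_red: "set (red v) \<subseteq> set v"
  by (induction v) (use set_cred in fastforce)+

lemma snd_invw: "c \<in> set (invw v) \<Longrightarrow> snd c \<in> snd ` set v"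
  by (force simp: invw_def)

lemma substw_Nil[simp]: "substw s [] = []"
  by (simp add: substw_def)

lemma substw_Cons[simp]: "substw s ((b, x) # v) = (if b then s x else invw (s x)) @ substw s v"
  by (simp add: substw_def)

lemma set_substw: "c \<in> set (substw s v) \<Longrightarrow> \<exists>a \<in> set v. snd c \<in> snd ` set (s (snd a))"
proof (induction v)
  case (Cons a v)
  obtain b x where a: "a = (b, x)" by force
  have "c \<in> set (if b then s x else invw (s x)) \<or> c \<in> set (substw s v)"
    using Cons.prems by (simp add: a)
  then show ?case
  proof
    assume "c \<in> set (if b then s x else invw (s x))"
    then have "snd c \<in> snd ` set (s x)" using snd_invw[of c "s x"] by (auto split: if_splits)
    then show ?thesis by (auto simp: a)
  next
    assume "c \<in> set (substw s v)"
    then show ?thesis using Cons.IH by auto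
  qed
qed simp

lemma length_substw: "length (substw s v) = (\<Sum>a \<leftarrow> v. length (s (snd a)))"
  unfolding substw_def by (induction v) (auto simp: invw_def)

context group
begin

lemma eval_carrier: "(\<forall>a \<in> set v. f (snd a) \<in> carrier G) \<Longrightarrow> word_eval G f v \<in> carrier G"
  by (induction v) auto

lemma eval_append:
  "(\<forall>a \<in> set v. f (snd a) \<in> carrier G) \<Longrightarrow> (\<forall>a \<in> set w. f (snd a) \<in> carrier G) \<Longrightarrow>
   word_eval G f (v @ w) = word_eval G f v \<otimes> word_eval G f w"
  by (induction v) (auto simp: m_assoc eval_carrier)

lemma eval_invw:
  "(\<forall>a \<in> set v. f (snd a) \<in> carrier G) \<Longrightarrow> word_eval G f (invw v) = inv (word_eval G f v)"
proof (induction v)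
  case Nil
  then show ?case by (simp add: invw_def)
next
  case (Cons a v)
  obtain b x where a: "a = (b, x)" by force
  have iv: "invw (a # v) = invw v @ [(\<not> b, x)]" by (simp add: invw_def a)
  have s: "\<forall>a \<in> set (invw v). f (snd a) \<in> carrier G" using Cons.prems by (auto simp: invw_def)
  have fx: "f x \<in> carrier G" using Cons.prems a by auto
  have ev: "word_eval G f v \<in> carrier G" using Cons.prems by (auto intro: eval_carrier)
  have "word_eval G f (invw (a # v)) = word_eval G f (invw v) \<otimes> word_eval G f [(\<not> b, x)]"
    unfolding iv using s fx by (simp add: eval_append)
  also have "\<dots> = inv (word_eval G f v) \<otimes> inv (if b then f x else inv (f x))"
    using Cons fx by auto
  also have "\<dots> = inv (word_eval G f (a # v))"
    using fx ev a by (simp add: inv_mult_group)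
  finally show ?case .

qed

lemma eval_cred:
  "f (snd a) \<in> carrier G \<Longrightarrow> (\<forall>a \<in> set v. f (snd a) \<in> carrier G) \<Longrightarrow>
   word_eval G f (cred a v) = word_eval G f (a # v)"
proof (cases "(a, v)" rule: cred.cases)
  case (2 b x c y w)
  assume h: "f (snd a) \<in> carrier G" "\<forall>a \<in> set v. f (snd a) \<in> carrier G"
  then have fx: "f x \<in> carrier G" and w: "word_eval G f w \<in> carrier G"
    using 2 by (auto intro: eval_carrier)
  show ?thesis using 2 fx w
    by (auto simp: m_assoc[symmetric])
qed auto

lemma eval_red:
  "(\<forall>a \<in> set v. f (snd a) \<in> carrier G) \<Longrightarrow> word_eval G f (red v) = word_eval G f v"
proof (induction v)
  case (Cons a v)
  have "\<forall>a \<in> set (red v). f (snd a) \<in> carrier G" using Cons.prems set_red by fastforce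
  then show ?case using Cons by (cases a) (simp add: eval_cred)
qed simp

lemma eval_substw:
  assumes "\<forall>a \<in> set v. \<forall>c \<in> set (s (snd a)). f (snd c) \<in> carrier G"
  shows "word_eval G f (substw s v) = word_eval G (\<lambda>x. word_eval G f (s x)) v"
  using assms
proof (induction v)
  case Nil
  then show ?case by (simp add: substw_def)
next
  case (Cons a v)
  obtain b x where a: "a = (b, x)" by force
  have sx: "\<forall>c \<in> set (s x). f (snd c) \<in> carrier G" using Cons.prems a by auto
  have sv: "\<forall>c \<in> set (substw s v). f (snd c) \<in> carrier G"
  proof
    fix c assume "c \<in> set (substw s v)"
    then obtain a' where "a' \<in> set v" "snd c \<in> snd ` set (s (snd a'))" using set_substw by blast
    then obtain c' where "c' \<in> set (s (snd a'))" "snd c' = snd c" by force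
    then show "f (snd c) \<in> carrier G" using Cons.prems \<open>a' \<in> set v\<close> by force
  qed
  have si: "\<forall>c \<in> set (invw (s x)). f (snd c) \<in> carrier G" using sx snd_invw by fastforce
  have eq: "substw s (a # v) = (if b then s x else invw (s x)) @ substw s v"
    by (simp add: substw_def a)
  show ?case
    using Cons sx sv si unfolding eq by (simp add: a eval_append eval_invw)
qed

end

lemma eval_hom:
  assumes "group G" "group H" "h \<in> hom G H" "\<forall>a \<in> set v. f (snd a) \<in> carrier G"
  shows "word_eval H (\<lambda>x. h (f x)) v = h (word_eval G f v)"
  using assms(4)
proof (induction v)
  case Nil
  then show ?case using assms by (simp add: group_hom.hom_one group_hom_def group_hom_axioms_def)
next
  case (Cons a v)
  interpret gh: group_hom G H h using assms by (simp add: group_hom_def group_hom_axioms_def)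
  obtain b x where a: "a = (b, x)" by force
  have fx: "f x \<in> carrier G" using Cons.prems a by auto
  have ev: "word_eval G f v \<in> carrier G" using Cons.prems by (auto intro: group.eval_carrier[OF assms(1)])
  show ?case using Cons fx ev a by (auto simp: gh.hom_inv)
qed

lemma mult_B: "g \<in> Bij S \<Longrightarrow> f \<in> Bij S \<Longrightarrow> g \<otimes>\<^bsub>BijGroup S\<^esub> f = compose S g f"
  by (simp add: BijGroup_def)

lemma one_B: "\<one>\<^bsub>BijGroup S\<^esub> = (\<lambda>x \<in> S. x)"
  by (simp add: BijGroup_def)

lemma carrier_B: "carrier (BijGroup S) = Bij S"
  by (simp add: BijGroup_def)

lemma Bij_inv_iff:
  assumes "\<sigma> \<in> Bij S" "\<omega> \<in> S" "\<eta> \<in> S"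
  shows "inv_into S \<sigma> \<omega> = \<eta> \<longleftrightarrow> \<sigma> \<eta> = \<omega>"
proof -
  have b: "bij_betw \<sigma> S S" using assms by (simp add: Bij_def)
  show ?thesis
    using b assms bij_betw_inv_into_left bij_betw_inv_into_right by metis
qed

lemma dist_nonneg: "0 \<le> dist_Om S a b"
  by (simp add: dist_Om_def)

lemma dist_le1: "finite S \<Longrightarrow> dist_Om S a b \<le> 1"
  unfolding dist_Om_def
  by (cases "card S = 0") (auto intro!: card_mono simp: divide_le_eq_1 card_gt_0_iff)

lemma dist_sym: "dist_Om S a b = dist_Om S b a"
  unfolding dist_Om_def by (metis (mono_tags, lifting))

lemma dist_card_le:
  assumes "card A \<le> card B + card C"
  shows "real (card A) / real (card S) \<le> real (card B) / real (card S) + real (card C) / real (card S)"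
proof -
  have "real (card A) \<le> real (card B) + real (card C)" using assms by linarith
  then have "real (card A) / real (card S) \<le> (real (card B) + real (card C)) / real (card S)"
    by (simp add: divide_right_mono)
  then show ?thesis by (simp add: add_divide_distrib)
qed

lemma dist_triangle: "finite S \<Longrightarrow> dist_Om S a c \<le> dist_Om S a b + dist_Om S b c"
  unfolding dist_Om_def
proof (rule dist_card_le)
  assume "finite S"
  have "card {w \<in> S. a w \<noteq> c w} \<le> card ({w \<in> S. a w \<noteq> b w} \<union> {w \<in> S. b w \<noteq> c w})"
    by (rule card_mono) (use \<open>finite S\<close> in auto)
  also have "\<dots> \<le> card {w \<in> S. a w \<noteq> b w} + card {w \<in> S. b w \<noteq> c w}"
    by (rule card_Un_le)
  finally show "card {w \<in> S. a w \<noteq> c w} \<le> card {w \<in> S. a w \<noteq> b w} + card {w \<in> S. b w \<noteq> c w}" .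
qed

lemma card_pre_Bij:
  assumes "finite S" "b \<in> Bij S"
  shows "card {w \<in> S. P (b w)} = card {w \<in> S. P w}"
proof -
  have bb: "bij_betw b S S" using assms by (simp add: Bij_def)
  have "b ` {w \<in> S. P (b w)} = {w \<in> S. P w}"
    using bb by (auto simp: bij_betw_def)
  moreover have "inj_on b {w \<in> S. P (b w)}"
    using bb by (auto simp: bij_betw_def intro: inj_on_subset)
  ultimately show ?thesis by (metis card_image)
qed

lemma dist_comp:
  assumes "finite S" "b' \<in> Bij S"
  shows "dist_Om S (compose S a b) (compose S a' b') \<le> dist_Om S a a' + dist_Om S b b'"
  unfolding dist_Om_def
proof -
  have "card {w \<in> S. compose S a b w \<noteq> compose S a' b' w}
      \<le> card ({w \<in> S. b w \<noteq> b' w} \<union> {w \<in> S. a (b' w) \<noteq> a' (b' w)})"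
    by (rule card_mono) (use assms in \<open>auto simp: compose_def\<close>)
  also have "\<dots> \<le> card {w \<in> S. b w \<noteq> b' w} + card {w \<in> S. a (b' w) \<noteq> a' (b' w)}"
    by (rule card_Un_le)
  also have "card {w \<in> S. a (b' w) \<noteq> a' (b' w)} = card {w \<in> S. a w \<noteq> a' w}"
    using card_pre_Bij[OF assms, of "\<lambda>w. a w \<noteq> a' w"] by simp
  finally show "real (card {w \<in> S. compose S a b w \<noteq> compose S a' b' w}) / real (card S)
    \<le> real (card {w \<in> S. a w \<noteq> a' w}) / real (card S) + real (card {w \<in> S. b w \<noteq> b' w}) / real (card S)"
    using dist_card_le by (simp add: add.commute)
qed

lemma dist_inv:
  assumes "finite S" "\<sigma> \<in> Bij S" "\<tau> \<in> Bij S"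
  shows "dist_Om S (inv\<^bsub>BijGroup S\<^esub> \<sigma>) (inv\<^bsub>BijGroup S\<^esub> \<tau>) = dist_Om S \<sigma> \<tau>"
proof -
  have "{w \<in> S. (inv\<^bsub>BijGroup S\<^esub> \<sigma>) (\<tau> w) \<noteq> (inv\<^bsub>BijGroup S\<^esub> \<tau>) (\<tau> w)} = {w \<in> S. \<sigma> w \<noteq> \<tau> w}"
  proof -
    have "\<tau> w \<in> S" if "w \<in> S" for w using assms that Bij_imp_funcset by blast
    moreover have "inv_into S \<tau> (\<tau> w) = w" if "w \<in> S" for w
      using Bij_inv_iff[OF assms(3)] that \<open>w \<in> S \<Longrightarrow> \<tau> w \<in> S\<close> by blast
    moreover have "inv_into S \<sigma> (\<tau> w) = w \<longleftrightarrow> \<sigma> w = \<tau> w" if "w \<in> S" for w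
      using Bij_inv_iff[OF assms(2)] that \<open>w \<in> S \<Longrightarrow> \<tau> w \<in> S\<close> by blast
    ultimately show ?thesis using assms by (auto simp: inv_BijGroup)
  qed
  then show ?thesis
    unfolding dist_Om_def
    using card_pre_Bij[OF assms(1) assms(3), of "\<lambda>w. (inv\<^bsub>BijGroup S\<^esub> \<sigma>) w \<noteq> (inv\<^bsub>BijGroup S\<^esub> \<tau>) w"]
    by simp
qed

lemma dist_invcomp_id:
  assumes "finite S" "\<sigma> \<in> Bij S" "\<tau> \<in> Bij S"
  shows "dist_Om S (inv\<^bsub>BijGroup S\<^esub> \<sigma> \<otimes>\<^bsub>BijGroup S\<^esub> \<tau>) id = dist_Om S \<sigma> \<tau>"
proof -
  have i: "inv\<^bsub>BijGroup S\<^esub> \<sigma> \<in> Bij S"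
    using group.inv_closed[OF group_BijGroup] assms by (metis carrier_B)
  have "{w \<in> S. (inv\<^bsub>BijGroup S\<^esub> \<sigma> \<otimes>\<^bsub>BijGroup S\<^esub> \<tau>) w \<noteq> id w} = {w \<in> S. \<sigma> w \<noteq> \<tau> w}"
  proof -
    have "\<tau> w \<in> S" if "w \<in> S" for w using assms that Bij_imp_funcset by blast
    moreover have "inv_into S \<sigma> (\<tau> w) = w \<longleftrightarrow> \<sigma> w = \<tau> w" if "w \<in> S" for w
      using Bij_inv_iff[OF assms(2)] that \<open>w \<in> S \<Longrightarrow> \<tau> w \<in> S\<close> by blast
    ultimately show ?thesis using assms i by (auto simp: mult_B compose_def inv_BijGroup)
  qed
  then show ?thesis unfolding dist_Om_def by simp
qed

lemma dist_eval:
  assumes "finite S" "\<forall>a \<in> set v. \<rho> (snd a) \<in> Bij S" "\<forall>a \<in> set v. \<psi> (snd a) \<in> Bij S"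
  shows "dist_Om S (word_eval (BijGroup S) \<rho> v) (word_eval (BijGroup S) \<psi> v)
     \<le> (\<Sum>a \<leftarrow> v. dist_Om S (\<rho> (snd a)) (\<psi> (snd a)))"
  using assms(2,3)
proof (induction v)
  case Nil
  then show ?case by (simp add: dist_Om_def)
next
  case (Cons a v)
  interpret B: group "BijGroup S" by (rule group_BijGroup)
  obtain b x where a: "a = (b, x)" by force
  have rx: "\<rho> x \<in> Bij S" "\<psi> x \<in> Bij S" using Cons.prems a by auto
  have ev: "word_eval (BijGroup S) \<rho> v \<in> Bij S" "word_eval (BijGroup S) \<psi> v \<in> Bij S"
    using Cons.prems B.eval_carrier[of v \<rho>] B.eval_carrier[of v \<psi>] by (auto simp: carrier_B)
  define g where "g = (if b then \<rho> x else inv\<^bsub>BijGroup S\<^esub> (\<rho> x))"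
  define g' where "g' = (if b then \<psi> x else inv\<^bsub>BijGroup S\<^esub> (\<psi> x))"
  have gB: "g \<in> Bij S" "g' \<in> Bij S" unfolding g_def g'_def using rx B.inv_closed
    by (auto simp: carrier_B)
  have dg: "dist_Om S g g' = dist_Om S (\<rho> x) (\<psi> x)"
    unfolding g_def g'_def using dist_inv[OF assms(1) rx] by auto
  have "dist_Om S (word_eval (BijGroup S) \<rho> (a # v)) (word_eval (BijGroup S) \<psi> (a # v))
      = dist_Om S (compose S g (word_eval (BijGroup S) \<rho> v)) (compose S g' (word_eval (BijGroup S) \<psi> v))"
    using gB ev by (simp add: a g_def g'_def mult_B)
  also have "\<dots> \<le> dist_Om S g g' + dist_Om S (word_eval (BijGroup S) \<rho> v) (word_eval (BijGroup S) \<psi> v)"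
    by (rule dist_comp[OF assms(1) ev(2)])
  also have "\<dots> \<le> dist_Om S (\<rho> x) (\<psi> x) + (\<Sum>a \<leftarrow> v. dist_Om S (\<rho> (snd a)) (\<psi> (snd a)))"
    using Cons dg by simp
  finally show ?case by (simp add: a)
qed

lemma eval_cong: "(\<And>a. a \<in> set v \<Longrightarrow> f (snd a) = g (snd a)) \<Longrightarrow> word_eval G f v = word_eval G g v"
  by (induction v) (auto, metis+)

lemma free_letters: "v \<in> free_elems X \<Longrightarrow> a \<in> set v \<Longrightarrow> snd a \<in> X"
  by (auto simp: free_elems_def)

lemma length_substw_le:
  assumes "\<forall>a \<in> set r. length (s (snd a)) \<le> L"
  shows "length (substw s r) \<le> length r * L"
proof -
  have "length (substw s r) = (\<Sum>a \<leftarrow> r. length (s (snd a)))" by (rule length_substw)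
  also have "\<dots> \<le> (\<Sum>a \<leftarrow> r. L)" by (rule sum_list_mono) (use assms in auto)
  also have "\<dots> = length r * L" by (simp add: sum_list_triv)
  finally show ?thesis .
qed

lemma word_norm_Un: "finite A \<Longrightarrow> finite B \<Longrightarrow> word_norm (A \<union> B) \<le> word_norm A + word_norm B"
  unfolding word_norm_def by (simp add: sum_Un_nat)

locale setting =
  fixes G :: "('g, 'm) monoid_scheme"
    and X1 :: "'a set" and f1 :: "'a \<Rightarrow> 'g"
    and X2 :: "'b set" and f2 :: "'b \<Rightarrow> 'g"
    and w :: "'a \<Rightarrow> (bool \<times> 'b) list" and u :: "'b \<Rightarrow> (bool \<times> 'a) list"
  assumes grp: "group G" and fin1: "finite X1" and fin2: "finite X2"
    and c1: "f1 ` X1 \<subseteq> carrier G" and c2: "f2 ` X2 \<subseteq> carrier G"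
    and w_free: "\<And>x. x \<in> X1 \<Longrightarrow> w x \<in> free_elems X2"
    and w_eval: "\<And>x. x \<in> X1 \<Longrightarrow> word_eval G f2 (w x) = f1 x"
    and u_free: "\<And>x. x \<in> X2 \<Longrightarrow> u x \<in> free_elems X1"
    and u_eval: "\<And>x. x \<in> X2 \<Longrightarrow> word_eval G f1 (u x) = f2 x"
begin

definition L :: nat where "L = (\<Sum>x \<in> X1. length (w x))"
definition M :: nat where "M = (\<Sum>x \<in> X2. length (u x))"
definition K :: nat where "K = (\<Sum>x \<in> X2. 1 + L * length (u x))"

definition rel2 :: "'b \<Rightarrow> (bool \<times> 'b) list" where
  "rel2 x = red ((False, x) # substw w (u x))"

definition E2 :: "(bool \<times> 'a) list set \<Rightarrow> (bool \<times> 'b) list set" where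
  "E2 E1 = (\<lambda>r. red (substw w r)) ` E1 \<union> rel2 ` X2"

lemma L_ge: "x \<in> X1 \<Longrightarrow> length (w x) \<le> L"
  unfolding L_def using fin1 by (intro member_le_sum) auto

lemma M_ge: "x \<in> X2 \<Longrightarrow> length (u x) \<le> M"
  unfolding M_def using fin2 by (intro member_le_sum) auto

lemma subst_letters:
  assumes "\<forall>a \<in> set r. snd a \<in> X1" "c \<in> set (substw w r)"
  shows "snd c \<in> X2"
proof -
  obtain a where "a \<in> set r" "snd c \<in> snd ` set (w (snd a))" using set_substw[OF assms(2)] by blast
  then show ?thesis using assms(1) w_free free_letters by fastforce
qed

lemma subst_eval:
  assumes "group H" "\<forall>a \<in> set r. snd a \<in> X1" "\<forall>x \<in> X2. \<rho> x \<in> carrier H"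
  shows "word_eval H \<rho> (substw w r) = word_eval H (\<lambda>x. word_eval H \<rho> (w x)) r"
proof -
  have "\<forall>a \<in> set r. \<forall>c \<in> set (w (snd a)). \<rho> (snd c) \<in> carrier H"
    using assms w_free free_letters by blast
  then show ?thesis by (rule group.eval_substw[OF assms(1)])
qed

lemma subst_eval_G:
  assumes "\<forall>a \<in> set r. snd a \<in> X1"
  shows "word_eval G f2 (substw w r) = word_eval G f1 r"
proof -
  have "word_eval G f2 (substw w r) = word_eval G (\<lambda>x. word_eval G f2 (w x)) r"
    using subst_eval[OF grp assms] c2 by auto
  also have "\<dots> = word_eval G f1 r" using assms w_eval by (intro eval_cong) auto
  finally show ?thesis .
qed

lemma E2_ker:
  assumes "E1 \<subseteq> ker_free G X1 f1"
  shows "E2 E1 \<subseteq> ker_free G X2 f2"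
proof
  fix t assume "t \<in> E2 E1"
  then consider r where "r \<in> E1" "t = red (substw w r)" | x where "x \<in> X2" "t = rel2 x"
    unfolding E2_def by blast
  then show "t \<in> ker_free G X2 f2"
  proof cases
    case 1
    then have r: "r \<in> free_elems X1" "word_eval G f1 r = \<one>\<^bsub>G\<^esub>" using assms by (auto simp: ker_free_def)
    have rl: "\<forall>a \<in> set r. snd a \<in> X1" using r free_letters by blast
    have sl: "\<forall>c \<in> set (substw w r). snd c \<in> X2" using subst_letters[OF rl] by blast
    have "\<forall>c \<in> set t. snd c \<in> X2" using sl set_red 1 by blast
    moreover have "word_eval G f2 t = \<one>\<^bsub>G\<^esub>"
      using 1 r group.eval_red[OF grp, of "substw w r" f2] sl c2 subst_eval_G[OF rl] by auto
    ultimately show ?thesis using 1 reduced_red by (auto simp: ker_free_def free_elems_def)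
  next
    case 2
    have ul: "\<forall>a \<in> set (u x). snd a \<in> X1" using u_free 2 free_letters by blast
    have sl: "\<forall>c \<in> set ((False, x) # substw w (u x)). snd c \<in> X2" using subst_letters[OF ul] 2 by auto
    have "\<forall>c \<in> set t. snd c \<in> X2" using sl set_red 2 unfolding rel2_def by blast
    moreover have "word_eval G f2 t = \<one>\<^bsub>G\<^esub>"
    proof -
      have "word_eval G f2 t = word_eval G f2 ((False, x) # substw w (u x))"
        unfolding 2 rel2_def using group.eval_red[OF grp] sl c2 by blast
      also have "\<dots> = inv\<^bsub>G\<^esub> (f2 x) \<otimes>\<^bsub>G\<^esub> f2 x" using subst_eval_G[OF ul] u_eval 2 by simp
      also have "\<dots> = \<one>\<^bsub>G\<^esub>" using 2 c2 group.l_inv[OF grp] by auto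
      finally show ?thesis .
    qed
    moreover have "reduced t" using 2 reduced_red unfolding rel2_def by metis
    ultimately show ?thesis using 2 by (auto simp: ker_free_def free_elems_def)
  qed
qed

lemma E2_norm:
  assumes "finite E1" "E1 \<subseteq> free_elems X1"
  shows "word_norm (E2 E1) \<le> L * word_norm E1 + K"
proof -
  have "word_norm (E2 E1) \<le> word_norm ((\<lambda>r. red (substw w r)) ` E1) + word_norm (rel2 ` X2)"
    unfolding E2_def using assms fin2 by (intro word_norm_Un) auto
  moreover have "word_norm ((\<lambda>r. red (substw w r)) ` E1) \<le> L * word_norm E1"
  proof -
    have "word_norm ((\<lambda>r. red (substw w r)) ` E1) \<le> (\<Sum>r \<in> E1. length (red (substw w r)))"
      unfolding word_norm_def using sum_image_le[OF assms(1), of length "\<lambda>r. red (substw w r)"]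
      by (simp add: o_def)
    also have "\<dots> \<le> (\<Sum>r \<in> E1. L * length r)"
    proof (rule sum_mono)
      fix r assume "r \<in> E1"
      then have "\<forall>a \<in> set r. snd a \<in> X1" using assms free_letters by blast
      then have "length (substw w r) \<le> length r * L"
        using L_ge by (intro length_substw_le) auto
      then show "length (red (substw w r)) \<le> L * length r"
        using length_red[of "substw w r"] by (simp add: mult.commute)
    qed
    also have "\<dots> = L * word_norm E1" by (simp add: word_norm_def sum_distrib_left)
    finally show ?thesis .
  qed
  moreover have "word_norm (rel2 ` X2) \<le> K"
  proof -
    have "word_norm (rel2 ` X2) \<le> (\<Sum>x \<in> X2. length (rel2 x))"
      unfolding word_norm_def using sum_image_le[OF fin2, of length rel2] by (simp add: o_def)
    also have "\<dots> \<le> K"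
      unfolding K_def
    proof (rule sum_mono)
      fix x assume "x \<in> X2"
      then have "\<forall>a \<in> set (u x). snd a \<in> X1" using u_free free_letters by blast
      then have "length (substw w (u x)) \<le> length (u x) * L"
        using L_ge by (intro length_substw_le) auto
      then show "length (rel2 x) \<le> 1 + L * length (u x)"
        unfolding rel2_def using length_red[of "(False, x) # substw w (u x)"] by (simp add: mult.commute)
    qed
    finally show ?thesis .
  qed
  ultimately show ?thesis by linarith
qed

end

context setting
begin

lemma transfer:
  assumes V: "valid_pair G X1 f1 \<epsilon>1 \<delta> E1" and e: "0 < \<epsilon>" and Me: "real M * \<epsilon>1 \<le> \<epsilon> / 2" and e1: "0 < \<epsilon>1"
  shows "valid_pair G X2 f2 \<epsilon> (min \<delta> (\<epsilon> / 2)) (E2 E1)"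
proof -
  have d: "0 < \<delta>" "\<delta> \<le> 1" and fE: "finite E1" and kE: "E1 \<subseteq> ker_free G X1 f1"
    and hV: "\<And>(\<Omega> :: nat set) (\<rho> :: 'a \<Rightarrow> nat \<Rightarrow> nat). finite \<Omega> \<Longrightarrow> (\<forall>x \<in> X1. \<rho> x \<in> Bij \<Omega>) \<Longrightarrow>
        (\<forall>r \<in> E1. dist_Om \<Omega> (word_eval (BijGroup \<Omega>) \<rho> r) id < \<delta>) \<Longrightarrow>
        (\<exists>\<phi> \<in> hom G (BijGroup \<Omega>). \<forall>x \<in> X1. dist_Om \<Omega> (\<rho> x) (\<phi> (f1 x)) < \<epsilon>1)"
    using V unfolding valid_pair_def by blast+
  have main: "\<exists>\<phi> \<in> hom G (BijGroup \<Omega>). \<forall>x \<in> X2. dist_Om \<Omega> (\<rho>2 x) (\<phi> (f2 x)) < \<epsilon>"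
    if fO: "finite \<Omega>" and rB: "\<forall>x \<in> X2. \<rho>2 x \<in> Bij \<Omega>"
      and rel: "\<forall>t \<in> E2 E1. dist_Om \<Omega> (word_eval (BijGroup \<Omega>) \<rho>2 t) id < min \<delta> (\<epsilon> / 2)"
    for \<Omega> :: "nat set" and \<rho>2 :: "'b \<Rightarrow> nat \<Rightarrow> nat"
  proof -
    interpret B: group "BijGroup \<Omega>" by (rule group_BijGroup)
    define \<rho>1 where "\<rho>1 = (\<lambda>x. word_eval (BijGroup \<Omega>) \<rho>2 (w x))"
    have rc: "\<forall>x \<in> X2. \<rho>2 x \<in> carrier (BijGroup \<Omega>)" using rB by (simp add: carrier_B)
    have r1B: "\<rho>1 x \<in> Bij \<Omega>" if "x \<in> X1" for x
    proof -
      have "\<forall>a \<in> set (w x). \<rho>2 (snd a) \<in> carrier (BijGroup \<Omega>)"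
        using w_free[OF that] free_letters rc by blast
      then show ?thesis unfolding \<rho>1_def using B.eval_carrier carrier_B by metis
    qed
    have ev1: "word_eval (BijGroup \<Omega>) \<rho>1 r = word_eval (BijGroup \<Omega>) \<rho>2 (red (substw w r))"
      if "\<forall>a \<in> set r. snd a \<in> X1" for r
    proof -
      have sl: "\<forall>c \<in> set (substw w r). \<rho>2 (snd c) \<in> carrier (BijGroup \<Omega>)"
        using subst_letters[OF that] rc by blast
      show ?thesis
        unfolding \<rho>1_def using subst_eval[OF group_BijGroup that rc] B.eval_red[OF sl] by simp
    qed
    have "\<forall>r \<in> E1. dist_Om \<Omega> (word_eval (BijGroup \<Omega>) \<rho>1 r) id < \<delta>"
    proof
      fix r assume "r \<in> E1"
      then have "r \<in> free_elems X1" using kE by (auto simp: ker_free_def)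
      then have rl: "\<forall>a \<in> set r. snd a \<in> X1" using free_letters by blast
      have "red (substw w r) \<in> E2 E1" using \<open>r \<in> E1\<close> by (auto simp: E2_def)
      then show "dist_Om \<Omega> (word_eval (BijGroup \<Omega>) \<rho>1 r) id < \<delta>"
        using rel ev1[OF rl] by fastforce
    qed
    then obtain \<phi> where ph: "\<phi> \<in> hom G (BijGroup \<Omega>)"
      and phd: "\<forall>x \<in> X1. dist_Om \<Omega> (\<rho>1 x) (\<phi> (f1 x)) < \<epsilon>1"
      using hV[OF fO] r1B by blast
    have phB: "\<phi> g \<in> Bij \<Omega>" if "g \<in> carrier G" for g
      using ph that by (auto simp: hom_def carrier_B)
    have "\<forall>x \<in> X2. dist_Om \<Omega> (\<rho>2 x) (\<phi> (f2 x)) < \<epsilon>"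
    proof
      fix x assume x: "x \<in> X2"
      have ul: "\<forall>a \<in> set (u x). snd a \<in> X1" using u_free[OF x] free_letters by blast
      define A where "A = word_eval (BijGroup \<Omega>) \<rho>1 (u x)"
      have AB: "A \<in> Bij \<Omega>" unfolding A_def using B.eval_carrier[of "u x" \<rho>1] ul r1B
        by (auto simp: carrier_B)
      have sl: "\<forall>c \<in> set ((False, x) # substw w (u x)). \<rho>2 (snd c) \<in> carrier (BijGroup \<Omega>)"
        using subst_letters[OF ul] rc x by auto
      have "word_eval (BijGroup \<Omega>) \<rho>2 (rel2 x) = word_eval (BijGroup \<Omega>) \<rho>2 ((False, x) # substw w (u x))"
        unfolding rel2_def using B.eval_red[OF sl] .
      also have "\<dots> = inv\<^bsub>BijGroup \<Omega>\<^esub> (\<rho>2 x) \<otimes>\<^bsub>BijGroup \<Omega>\<^esub> A"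
        using ev1[OF ul] B.eval_red[of "substw w (u x)" \<rho>2] sl unfolding A_def by (simp add: rel2_def)
      finally have "dist_Om \<Omega> (\<rho>2 x) A = dist_Om \<Omega> (word_eval (BijGroup \<Omega>) \<rho>2 (rel2 x)) id"
        using dist_invcomp_id[OF fO _ AB, of "\<rho>2 x"] rB x by simp
      also have "\<dots> < \<epsilon> / 2" using rel x by (auto simp: E2_def)
      finally have d1: "dist_Om \<Omega> (\<rho>2 x) A < \<epsilon> / 2" .
      have c1u: "\<forall>a \<in> set (u x). f1 (snd a) \<in> carrier G" using ul c1 by auto
      have "\<phi> (f2 x) = \<phi> (word_eval G f1 (u x))" using u_eval[OF x] by simp
      also have "\<dots> = word_eval (BijGroup \<Omega>) (\<lambda>y. \<phi> (f1 y)) (u x)"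
        using eval_hom[OF grp group_BijGroup ph c1u] by simp
      finally have pf: "\<phi> (f2 x) = word_eval (BijGroup \<Omega>) (\<lambda>y. \<phi> (f1 y)) (u x)" .
      have "dist_Om \<Omega> A (\<phi> (f2 x)) \<le> (\<Sum>a \<leftarrow> u x. dist_Om \<Omega> (\<rho>1 (snd a)) (\<phi> (f1 (snd a))))"
        unfolding pf A_def using ul r1B phB c1u by (intro dist_eval[OF fO]) auto
      also have "\<dots> \<le> (\<Sum>a \<leftarrow> u x. \<epsilon>1)"
        using ul phd by (intro sum_list_mono) (simp add: less_imp_le)
      also have "\<dots> = real (length (u x)) * \<epsilon>1" by (simp add: sum_list_triv)
      also have "\<dots> \<le> real M * \<epsilon>1"
      proof (rule mult_right_mono)
        show "real (length (u x)) \<le> real M" using M_ge[OF x] by simp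
        show "0 \<le> \<epsilon>1" using e1 by simp
      qed
      also have "\<dots> \<le> \<epsilon> / 2" by (rule Me)
      finally have d2: "dist_Om \<Omega> A (\<phi> (f2 x)) \<le> \<epsilon> / 2" .
      show "dist_Om \<Omega> (\<rho>2 x) (\<phi> (f2 x)) < \<epsilon>"
        using dist_triangle[OF fO, of "\<rho>2 x" "\<phi> (f2 x)" A] d1 d2 by linarith
    qed
    then show ?thesis using ph by blast
  qed
  show ?thesis
    unfolding valid_pair_def
    using d e fE fin2 E2_ker[OF kE] main by (auto simp: E2_def)
qed

end

lemma iso_kill:
  assumes G: "group G" and iso: "is_iso G X f" and H: "group H" and h: "\<forall>x \<in> X. h x \<in> carrier H"
    and vl: "\<forall>a \<in> set v. snd a \<in> X" and ve: "word_eval G f v = \<one>\<^bsub>G\<^esub>"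
  shows "word_eval H h v = \<one>\<^bsub>H\<^esub>"
proof -
  have fc: "f ` X \<subseteq> carrier G" using iso by (simp add: is_iso_def is_epi_def)
  have "red v \<in> free_elems X" using vl set_red reduced_red by (fastforce simp: free_elems_def)
  moreover have "word_eval G f (red v) = \<one>\<^bsub>G\<^esub>" using group.eval_red[OF G, of v f] vl fc ve by auto
  ultimately have "red v = []" using iso by (simp add: is_iso_def)
  then show ?thesis using group.eval_red[OF H, of v h] vl h by auto
qed

lemma iso_eq:
  assumes G: "group G" and iso: "is_iso G X f" and H: "group H" and h: "\<forall>x \<in> X. h x \<in> carrier H"
    and vl: "\<forall>a \<in> set v1. snd a \<in> X" "\<forall>a \<in> set v2. snd a \<in> X"
    and ve: "word_eval G f v1 = word_eval G f v2"
  shows "word_eval H h v1 = word_eval H h v2"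
proof -
  have fc: "\<forall>x \<in> X. f x \<in> carrier G" using iso by (auto simp: is_iso_def is_epi_def)
  have il: "\<forall>a \<in> set (invw v1). snd a \<in> X" using vl snd_invw by fastforce
  have cG: "\<forall>a \<in> set v. f (snd a) \<in> carrier G" if "\<forall>a \<in> set v. snd a \<in> X" for v :: "(bool \<times> _) list" using that fc by auto
  have cH: "\<forall>a \<in> set v. h (snd a) \<in> carrier H" if "\<forall>a \<in> set v. snd a \<in> X" for v :: "(bool \<times> _) list" using that h by auto
  have "word_eval G f (invw v1 @ v2) = inv\<^bsub>G\<^esub> (word_eval G f v1) \<otimes>\<^bsub>G\<^esub> word_eval G f v2"
    using group.eval_append[OF G cG[OF il] cG[OF vl(2)]] group.eval_invw[OF G cG[OF vl(1)]] by simp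
  also have "\<dots> = \<one>\<^bsub>G\<^esub>" using ve group.l_inv[OF G] group.eval_carrier[OF G cG[OF vl(2)]] by simp
  moreover have "\<forall>a \<in> set (invw v1 @ v2). snd a \<in> X" using il vl by auto
  ultimately have "word_eval H h (invw v1 @ v2) = \<one>\<^bsub>H\<^esub>"
    using iso_kill[OF G iso H h] by simp
  then have e: "inv\<^bsub>H\<^esub> (word_eval H h v1) \<otimes>\<^bsub>H\<^esub> word_eval H h v2 = \<one>\<^bsub>H\<^esub>"
    using group.eval_append[OF H cH[OF il] cH[OF vl(2)]] group.eval_invw[OF H cH[OF vl(1)]] by simp
  have c1: "word_eval H h v1 \<in> carrier H" "word_eval H h v2 \<in> carrier H"
    using group.eval_carrier[OF H cH[OF vl(1)]] group.eval_carrier[OF H cH[OF vl(2)]] by auto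
  have "\<one>\<^bsub>H\<^esub> = inv\<^bsub>H\<^esub> (word_eval H h v1) \<otimes>\<^bsub>H\<^esub> word_eval H h v2" using e by simp
  then have "word_eval H h v2 = word_eval H h v1 \<otimes>\<^bsub>H\<^esub> \<one>\<^bsub>H\<^esub>"
    using group.inv_solve_left[OF H _ c1] monoid.one_closed[OF group.is_monoid[OF H]] by blast
  then show ?thesis using monoid.r_one[OF group.is_monoid[OF H] c1(1)] by simp
qed

lemma free_ext:
  assumes G: "group G" and iso: "is_iso G X f" and H: "group H" and h: "\<forall>x \<in> X. h x \<in> carrier H"
  shows "\<exists>\<phi> \<in> hom G H. \<forall>x \<in> X. \<phi> (f x) = h x"
proof -
  have epi: "\<forall>g \<in> carrier G. \<exists>w \<in> free_elems X. word_eval G f w = g" and fc: "\<forall>x \<in> X. f x \<in> carrier G"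
    using iso by (auto simp: is_iso_def is_epi_def)
  define W where "W g = (SOME v. v \<in> free_elems X \<and> word_eval G f v = g)" for g
  have W: "W g \<in> free_elems X \<and> word_eval G f (W g) = g" if "g \<in> carrier G" for g
  proof -
    have "\<exists>v. v \<in> free_elems X \<and> word_eval G f v = g" using epi that by blast
    from someI_ex[OF this] show ?thesis unfolding W_def .
  qed
  have Wl: "\<forall>a \<in> set (W g). snd a \<in> X" if "g \<in> carrier G" for g using W[OF that] free_letters by blast
  have cG: "\<forall>a \<in> set v. f (snd a) \<in> carrier G" if "\<forall>a \<in> set v. snd a \<in> X" for v :: "(bool \<times> _) list" using that fc by auto
  have cH: "\<forall>a \<in> set v. h (snd a) \<in> carrier H" if "\<forall>a \<in> set v. snd a \<in> X" for v :: "(bool \<times> _) list" using that h by auto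
  define \<phi> where "\<phi> g = word_eval H h (W g)" for g
  have "\<phi> \<in> hom G H"
  proof (rule homI)
    fix g assume g: "g \<in> carrier G"
    show "\<phi> g \<in> carrier H" unfolding \<phi>_def by (rule group.eval_carrier[OF H cH[OF Wl[OF g]]])
  next
    fix g g' assume g: "g \<in> carrier G" "g' \<in> carrier G"
    have gg: "g \<otimes>\<^bsub>G\<^esub> g' \<in> carrier G" by (rule monoid.m_closed[OF group.is_monoid[OF G] g])
    have l: "\<forall>a \<in> set (W g @ W g'). snd a \<in> X" using Wl g by auto
    have "word_eval G f (W (g \<otimes>\<^bsub>G\<^esub> g')) = word_eval G f (W g @ W g')"
      using W[OF gg] W[OF g(1)] W[OF g(2)] group.eval_append[OF G cG[OF Wl[OF g(1)]] cG[OF Wl[OF g(2)]]] by simp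
    then have "\<phi> (g \<otimes>\<^bsub>G\<^esub> g') = word_eval H h (W g @ W g')"
      unfolding \<phi>_def using iso_eq[OF G iso H h Wl[OF gg] l] by simp
    also have "\<dots> = \<phi> g \<otimes>\<^bsub>H\<^esub> \<phi> g'"
      unfolding \<phi>_def using group.eval_append[OF H cH[OF Wl[OF g(1)]] cH[OF Wl[OF g(2)]]] by simp
    finally show "\<phi> (g \<otimes>\<^bsub>G\<^esub> g') = \<phi> g \<otimes>\<^bsub>H\<^esub> \<phi> g'" .
  qed
  moreover have "\<phi> (f x) = h x" if x: "x \<in> X" for x
  proof -
    have fx: "f x \<in> carrier G" using fc x by auto
    have l: "\<forall>a \<in> set [(True, x)]. snd a \<in> X" using x by simp
    have "word_eval G f (W (f x)) = word_eval G f [(True, x)]" using W[OF fx] fx monoid.r_one[OF group.is_monoid[OF G]] by simp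
    then have "\<phi> (f x) = word_eval H h [(True, x)]" unfolding \<phi>_def using iso_eq[OF G iso H h Wl[OF fx] l] by simp
    then show ?thesis using h x monoid.r_one[OF group.is_monoid[OF H]] by simp
  qed
  ultimately show ?thesis by blast
qed

lemma iso_valid:
  fixes X :: "'x set"
  assumes G: "group G" and iso: "is_iso G X f" and e: "0 < \<epsilon>"
  shows "valid_pair G X f \<epsilon> 1 {}"
  unfolding valid_pair_def
proof (intro conjI allI impI)
  fix \<Omega> :: "nat set" and \<rho> :: "'x \<Rightarrow> nat \<Rightarrow> nat"
  assume "finite \<Omega>" "\<forall>x \<in> X. \<rho> x \<in> Bij \<Omega>"
  then obtain \<phi> where "\<phi> \<in> hom G (BijGroup \<Omega>)" "\<forall>x \<in> X. \<phi> (f x) = \<rho> x"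
    using free_ext[OF G iso group_BijGroup[of \<Omega>], of \<rho>] by (auto simp: carrier_B)
  then show "\<exists>\<phi> \<in> hom G (BijGroup \<Omega>). \<forall>x \<in> X. dist_Om \<Omega> (\<rho> x) (\<phi> (f x)) < \<epsilon>"
    using e by (intro bexI[of _ \<phi>]) (auto simp: dist_Om_def)
qed auto

lemma reduced_adj:
  "reduced w \<Longrightarrow> Suc k < length w \<Longrightarrow> snd (w ! k) = snd (w ! Suc k) \<Longrightarrow> fst (w ! k) = fst (w ! Suc k)"
proof (induction w arbitrary: k rule: reduced.induct)
  case (3 b x c y w)
  show ?case
  proof (cases k)
    case 0
    then show ?thesis using 3 by auto
  next
    case (Suc k')
    then show ?thesis using 3 by auto
  qed
qed auto

lemma extend_perm:
  assumes S: "finite S" and D: "D \<subseteq> S" and inj: "inj_on p D" and im: "p ` D \<subseteq> S"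
  shows "\<exists>\<sigma>. bij_betw \<sigma> S S \<and> (\<forall>d \<in> D. \<sigma> d = p d)"
proof -
  have fD: "finite D" using S D finite_subset by blast
  have "card (S - D) = card (S - p ` D)"
    using D im fD S by (simp add: card_Diff_subset card_image[OF inj])
  then obtain g where g: "bij_betw g (S - D) (S - p ` D)"
    using bij_betw_iff_card[of "S - D" "S - p ` D"] S by auto
  define \<sigma> where "\<sigma> i = (if i \<in> D then p i else g i)" for i
  have img: "\<sigma> ` S \<subseteq> S"
    using im g unfolding \<sigma>_def bij_betw_def by auto
  have "inj_on \<sigma> S"
  proof (rule inj_onI)
    fix i j assume ij: "i \<in> S" "j \<in> S" "\<sigma> i = \<sigma> j"
    show "i = j"
    proof (cases "i \<in> D"; cases "j \<in> D")
      assume "i \<in> D" "j \<in> D" then show ?thesis using ij inj unfolding \<sigma>_def inj_on_def by auto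
    next
      assume "i \<in> D" "j \<notin> D"
      then have "g j \<notin> p ` D" using g ij unfolding bij_betw_def by auto
      moreover have "p i \<in> p ` D" using \<open>i \<in> D\<close> by blast
      moreover have "\<sigma> i = p i" "\<sigma> j = g j" using \<open>i \<in> D\<close> \<open>j \<notin> D\<close> by (simp_all add: \<sigma>_def)
      ultimately show ?thesis using ij(3) by metis
    next
      assume "i \<notin> D" "j \<in> D"
      then have "g i \<notin> p ` D" using g ij unfolding bij_betw_def by auto
      moreover have "p j \<in> p ` D" using \<open>j \<in> D\<close> by blast
      moreover have "\<sigma> j = p j" "\<sigma> i = g i" using \<open>i \<notin> D\<close> \<open>j \<in> D\<close> by (simp_all add: \<sigma>_def)
      ultimately show ?thesis using ij(3) by metis
    next
      assume "i \<notin> D" "j \<notin> D" then show ?thesis using ij g unfolding \<sigma>_def bij_betw_def inj_on_def by auto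
    qed
  qed
  then have "bij_betw \<sigma> S S" using endo_inj_surj[OF S img] by (simp add: bij_betw_def)
  then show ?thesis unfolding \<sigma>_def by auto
qed

locale rf =
  fixes w0 :: "(bool \<times> 'x) list" and N :: nat
  assumes red0: "reduced w0" and ne: "w0 \<noteq> []" and lt: "length w0 < N"
begin

abbreviation n where "n \<equiv> length w0"

definition T :: "'x \<Rightarrow> nat set" where "T x = {k. k < n \<and> w0 ! k = (True, x)}"
definition F :: "'x \<Rightarrow> nat set" where "F x = {k. k < n \<and> w0 ! k = (False, x)}"
definition D :: "'x \<Rightarrow> nat set" where "D x = Suc ` T x \<union> F x"
definition p :: "'x \<Rightarrow> nat \<Rightarrow> nat" where "p x i = (if i \<in> Suc ` T x then i - 1 else i + 1)"

lemma no_TF: "k \<in> F x \<Longrightarrow> Suc k \<in> T x \<Longrightarrow> False"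
  using reduced_adj[OF red0, of k] by (auto simp: T_def F_def)

lemma no_FT: "k \<in> Suc ` T x \<Longrightarrow> k \<in> F x \<Longrightarrow> False"
proof -
  assume a: "k \<in> Suc ` T x" "k \<in> F x"
  then obtain j where j: "k = Suc j" "j < n" "w0 ! j = (True, x)" by (auto simp: T_def)
  then show False using a reduced_adj[OF red0, of j] by (auto simp: F_def)
qed

lemma inj_p: "inj_on (p x) (D x)"
proof (rule inj_onI)
  fix i j assume ij: "i \<in> D x" "j \<in> D x" "p x i = p x j"
  show "i = j"
  proof (cases "i \<in> Suc ` T x"; cases "j \<in> Suc ` T x")
    assume "i \<in> Suc ` T x" "j \<in> Suc ` T x" then show ?thesis using ij by (auto simp: p_def)
  next
    assume a: "i \<in> Suc ` T x" "j \<notin> Suc ` T x"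
    then have "j \<in> F x" using ij by (auto simp: D_def)
    moreover have "i = Suc (Suc j)" using a ij by (auto simp: p_def)
    moreover have "Suc j \<in> T x" using a \<open>i = Suc (Suc j)\<close> by auto
    ultimately show ?thesis using no_TF by blast
  next
    assume a: "i \<notin> Suc ` T x" "j \<in> Suc ` T x"
    then have "i \<in> F x" using ij by (auto simp: D_def)
    moreover have "j = Suc (Suc i)" using a ij by (auto simp: p_def)
    moreover have "Suc i \<in> T x" using a \<open>j = Suc (Suc i)\<close> by auto
    ultimately show ?thesis using no_TF by blast
  next
    assume "i \<notin> Suc ` T x" "j \<notin> Suc ` T x" then show ?thesis using ij by (auto simp: p_def)
  qed
qed

lemma D_sub: "D x \<subseteq> {..n}"
  by (auto simp: D_def T_def F_def)

lemma p_im: "p x ` D x \<subseteq> {..n}"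
  by (auto simp: D_def T_def F_def p_def)

definition sig :: "'x \<Rightarrow> nat \<Rightarrow> nat" where
  "sig x = (SOME \<sigma>. bij_betw \<sigma> {..n} {..n} \<and> (\<forall>d \<in> D x. \<sigma> d = p x d))"

lemma sig: "bij_betw (sig x) {..n} {..n} \<and> (\<forall>d \<in> D x. sig x d = p x d)"
proof -
  have "\<exists>\<sigma>. bij_betw \<sigma> {..n} {..n} \<and> (\<forall>d \<in> D x. \<sigma> d = p x d)"
    by (rule extend_perm[OF _ D_sub inj_p p_im]) simp
  from someI_ex[OF this] show ?thesis unfolding sig_def .
qed

abbreviation \<Omega> where "\<Omega> \<equiv> {..<N}"

definition rho :: "'x \<Rightarrow> nat \<Rightarrow> nat" where
  "rho x = (\<lambda>i \<in> \<Omega>. if i \<le> n then sig x i else i)"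

lemma rho_Bij: "rho x \<in> Bij \<Omega>"
proof -
  define h where "h i = (if i \<le> n then sig x i else i)" for i
  have s: "bij_betw (sig x) {..n} {..n}" using sig by blast
  have "sig x i \<in> {..n}" if "i \<le> n" for i using s that unfolding bij_betw_def by auto
  then have img: "h ` \<Omega> \<subseteq> \<Omega>"
    using lt unfolding h_def by fastforce
  have inj: "inj_on h \<Omega>"
  proof (rule inj_onI)
    fix i j assume ij: "i \<in> \<Omega>" "j \<in> \<Omega>" "h i = h j"
    have si: "i \<le> n \<Longrightarrow> sig x i \<le> n" "j \<le> n \<Longrightarrow> sig x j \<le> n" using s unfolding bij_betw_def by auto
    show "i = j"
      using ij si s unfolding h_def bij_betw_def inj_on_def
      by (auto split: if_splits)
  qed
  have "bij_betw h \<Omega> \<Omega>" using endo_inj_surj[OF _ img inj] inj by (simp add: bij_betw_def)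
  then have "bij_betw (rho x) \<Omega> \<Omega>" unfolding rho_def h_def
    by (rule bij_betw_cong[THEN iffD1, rotated]) auto
  then show ?thesis unfolding Bij_def rho_def by auto
qed

lemma rho_fix: "n < i \<Longrightarrow> i < N \<Longrightarrow> rho x i = i"
  by (simp add: rho_def)

lemma eval_fix:
  assumes "n < i" "i < N"
  shows "word_eval (BijGroup \<Omega>) rho r i = i"
proof (induction r)
  case Nil
  then show ?case using assms by (simp add: one_B)
next
  case (Cons a r)
  interpret B: group "BijGroup \<Omega>" by (rule group_BijGroup)
  obtain b x where a: "a = (b, x)" by force
  have ev: "word_eval (BijGroup \<Omega>) rho r \<in> Bij \<Omega>"
    using B.eval_carrier[of r rho] rho_Bij by (auto simp: carrier_B)
  have iB: "inv\<^bsub>BijGroup \<Omega>\<^esub> (rho x) \<in> Bij \<Omega>" using B.inv_closed rho_Bij by (auto simp: carrier_B)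
  have inv: "inv_into \<Omega> (rho x) i = i"
    using Bij_inv_iff[OF rho_Bij, of i i x] rho_fix assms by auto
  show ?case
    using Cons ev iB rho_Bij[of x] assms inv
    by (auto simp: a mult_B compose_def inv_BijGroup rho_fix)
qed

lemma dist_small: "dist_Om \<Omega> (word_eval (BijGroup \<Omega>) rho r) id \<le> real (Suc n) / real N"
proof -
  have "{i \<in> \<Omega>. word_eval (BijGroup \<Omega>) rho r i \<noteq> id i} \<subseteq> {..n}"
  proof
    fix i assume i: "i \<in> {i \<in> \<Omega>. word_eval (BijGroup \<Omega>) rho r i \<noteq> id i}"
    show "i \<in> {..n}"
    proof (rule ccontr)
      assume "i \<notin> {..n}"
      then show False using eval_fix[of i r] i by auto
    qed
  qed
  then have "card {i \<in> \<Omega>. word_eval (BijGroup \<Omega>) rho r i \<noteq> id i} \<le> Suc n"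
    using card_mono[of "{..n}"] by fastforce
  then show ?thesis unfolding dist_Om_def by (simp add: divide_right_mono)
qed

lemma eval_drop:
  assumes "k \<le> n"
  shows "word_eval (BijGroup \<Omega>) rho (drop k w0) n = k"
  using assms
proof (induction k rule: inc_induct)
  case base
  then show ?case using lt by (simp add: one_B)
next
  case (step k)
  interpret B: group "BijGroup \<Omega>" by (rule group_BijGroup)
  obtain b x where a: "w0 ! k = (b, x)" by force
  have dr: "drop k w0 = (b, x) # drop (Suc k) w0" using Cons_nth_drop_Suc[of k w0] step a by simp
  have ev: "word_eval (BijGroup \<Omega>) rho (drop (Suc k) w0) \<in> Bij \<Omega>"
    using B.eval_carrier[of "drop (Suc k) w0" rho] rho_Bij by (auto simp: carrier_B)
  have iB: "inv\<^bsub>BijGroup \<Omega>\<^esub> (rho x) \<in> Bij \<Omega>" using B.inv_closed rho_Bij by (auto simp: carrier_B)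
  have kO: "k \<in> \<Omega>" "Suc k \<in> \<Omega>" "n \<in> \<Omega>" using step lt by auto
  have val: "(if b then rho x else inv\<^bsub>BijGroup \<Omega>\<^esub> (rho x)) (Suc k) = k"
  proof (cases b)
    case True
    then have "Suc k \<in> Suc ` T x" using step a by (auto simp: T_def)
    then have "sig x (Suc k) = k" using sig[of x] by (auto simp: D_def p_def)
    then show ?thesis using True kO step by (simp add: rho_def)
  next
    case False
    then have kF: "k \<in> F x" using step a by (auto simp: F_def)
    then have "k \<notin> Suc ` T x" using no_FT by blast
    then have "sig x k = Suc k" using sig[of x] kF by (auto simp: D_def p_def)
    then have "rho x k = Suc k" using kO step by (simp add: rho_def)
    then have "inv_into \<Omega> (rho x) (Suc k) = k" using Bij_inv_iff[OF rho_Bij] kO by blast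
    then show ?thesis using False kO by (simp add: inv_BijGroup rho_Bij)
  qed
  show ?case
    unfolding dr using step ev iB rho_Bij[of x] val kO
    by (cases b) (auto simp: mult_B compose_def)
qed

lemma eval_w0: "word_eval (BijGroup \<Omega>) rho w0 n = 0"
  using eval_drop[of 0] by simp

end

lemma lower:
  fixes X :: "'x set"
  assumes G: "group G" and fc: "\<forall>x \<in> X. f x \<in> carrier G"
    and w0: "w0 \<in> free_elems X" "w0 \<noteq> []" "word_eval G f w0 = \<one>\<^bsub>G\<^esub>"
    and V: "valid_pair G X f \<epsilon>1 \<delta> E1" and e1: "0 < \<epsilon>1"
    and small: "\<epsilon>1 * (2 * (real (length w0) + 1)) \<le> 1"
  shows "\<delta> < 2 * (real (length w0) + 1) * \<epsilon>1 \<and> 1 \<le> word_norm E1"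
proof -
  define m where "m = length w0"
  define N where "N = nat \<lfloor>1 / \<epsilon>1\<rfloor>"
  have y0: "0 \<le> 1 / \<epsilon>1" using e1 by simp
  have N1: "real N \<le> 1 / \<epsilon>1" unfolding N_def using y0 by simp
  have N2: "1 / \<epsilon>1 - 1 < real N" unfolding N_def using y0 by linarith
  have big: "2 * (real m + 1) \<le> 1 / \<epsilon>1" using small e1 unfolding m_def by (simp add: field_simps)
  have "(0::real) \<le> real m" by simp
  then have "real m < real N" using N2 big by argo
  then have ltN: "m < N" by simp
  have Npos: "0 < real N" using ltN by simp
  have d: "0 < \<delta>" and fE: "finite E1"
    and hV: "\<And>(\<Omega> :: nat set) (\<rho> :: 'x \<Rightarrow> nat \<Rightarrow> nat). finite \<Omega> \<Longrightarrow> (\<forall>x \<in> X. \<rho> x \<in> Bij \<Omega>) \<Longrightarrow>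
        (\<forall>r \<in> E1. dist_Om \<Omega> (word_eval (BijGroup \<Omega>) \<rho> r) id < \<delta>) \<Longrightarrow>
        (\<exists>\<phi> \<in> hom G (BijGroup \<Omega>). \<forall>x \<in> X. dist_Om \<Omega> (\<rho> x) (\<phi> (f x)) < \<epsilon>1)"
    using V unfolding valid_pair_def by blast+
  have red0: "reduced w0" using w0 by (simp add: free_elems_def)
  interpret rf w0 N using red0 w0 ltN m_def by unfold_locales auto
  have notall: "\<not> (\<forall>r \<in> E1. dist_Om \<Omega> (word_eval (BijGroup \<Omega>) rho r) id < \<delta>)"
  proof
    assume all: "\<forall>r \<in> E1. dist_Om \<Omega> (word_eval (BijGroup \<Omega>) rho r) id < \<delta>"
    obtain \<phi> where ph: "\<phi> \<in> hom G (BijGroup \<Omega>)" and phd: "\<forall>x \<in> X. dist_Om \<Omega> (rho x) (\<phi> (f x)) < \<epsilon>1"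
      using hV[OF _ _ all] rho_Bij by blast
    have eq: "rho x = \<phi> (f x)" if x: "x \<in> X" for x
    proof -
      have "\<epsilon>1 \<le> 1 / real N" using N1 Npos e1 by (simp add: field_simps)
      then have "real (card {i \<in> \<Omega>. rho x i \<noteq> \<phi> (f x) i}) / real N < 1 / real N"
        using phd x unfolding dist_Om_def by auto
      then have "card {i \<in> \<Omega>. rho x i \<noteq> \<phi> (f x) i} = 0" using Npos
        by (simp add: divide_strict_right_mono_neg field_simps)
      then have agree: "\<forall>i \<in> \<Omega>. rho x i = \<phi> (f x) i" by auto
      have "\<phi> (f x) \<in> Bij \<Omega>" using ph fc x by (auto simp: hom_def carrier_B)
      then show ?thesis using rho_Bij[of x] agree
        by (intro extensionalityI[of _ \<Omega>]) (auto simp: Bij_def)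
    qed
    have wl: "\<forall>a \<in> set w0. snd a \<in> X" using w0 free_letters by blast
    have "word_eval (BijGroup \<Omega>) rho w0 = word_eval (BijGroup \<Omega>) (\<lambda>x. \<phi> (f x)) w0"
      using wl eq by (intro eval_cong) auto
    also have "\<dots> = \<phi> (word_eval G f w0)"
      using eval_hom[OF G group_BijGroup ph] wl fc by auto
    also have "\<dots> = \<one>\<^bsub>BijGroup \<Omega>\<^esub>"
    proof -
      have gh: "group_hom G (BijGroup \<Omega>) \<phi>"
        using G group_BijGroup ph by (simp add: group_hom_def group_hom_axioms_def)
      show ?thesis using w0 group_hom.hom_one[OF gh] by simp
    qed
    finally have "word_eval (BijGroup \<Omega>) rho w0 m = m" using ltN m_def by (simp add: one_B)
    then show False using eval_w0 w0 m_def by simp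
  qed
  then obtain r where r: "r \<in> E1" "\<delta> \<le> dist_Om \<Omega> (word_eval (BijGroup \<Omega>) rho r) id"
    by (auto simp: not_less)
  have ds: "dist_Om \<Omega> (word_eval (BijGroup \<Omega>) rho r) id \<le> real (Suc m) / real N"
    using dist_small m_def by simp
  have "real (Suc m) / real N < 2 * (real m + 1) * \<epsilon>1"
  proof -
    have "1 / (2 * \<epsilon>1) \<ge> real m + 1" using big e1 by (simp add: field_simps)
    have h: "1 / (2 * \<epsilon>1) = (1 / \<epsilon>1) / 2" by simp
    have big2: "2 * real m + 2 \<le> 1 / \<epsilon>1" using big by simp
    have n0: "(0::real) \<le> real m" by simp
    have aux: "\<And>y M a :: real. 0 \<le> a \<Longrightarrow> y - 1 < M \<Longrightarrow> 2 * a + 2 \<le> y \<Longrightarrow> y / 2 < M"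
      by linarith
    have "(1 / \<epsilon>1) / 2 < real N" by (rule aux[OF n0 N2 big2])
    then have "1 / (2 * \<epsilon>1) < real N" using h by simp
    then have "1 < 2 * \<epsilon>1 * real N" using e1 by (simp add: field_simps)
    then have "real (Suc m) * 1 < real (Suc m) * (2 * \<epsilon>1 * real N)" by simp
    then show ?thesis using Npos by (simp add: field_simps)
  qed
  then have "\<delta> < 2 * (real m + 1) * \<epsilon>1" using r ds by linarith
  then have dl: "\<delta> < 2 * (real (length w0) + 1) * \<epsilon>1" using m_def by simp
  have "r \<noteq> []"
  proof
    assume "r = []"
    then have "dist_Om \<Omega> (word_eval (BijGroup \<Omega>) rho r) id = 0" by (simp add: one_B dist_Om_def)
    then show False using r d by linarith
  qed
  then have "1 \<le> length r" by (cases r) auto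
  also have "length r \<le> word_norm E1" unfolding word_norm_def using fE r by (intro member_le_sum) auto
  finally show ?thesis using dl by simp
qed

theorem proposition2p5:
  fixes G :: "('g, 'm) monoid_scheme"
    and X1 :: "'a set" and f1 :: "'a \<Rightarrow> 'g"
    and X2 :: "'b set" and f2 :: "'b \<Rightarrow> 'g"
  assumes "group G"
    and "finite X1" and "is_epi G X1 f1"
    and "finite X2" and "is_epi G X2 f2"
    and "stable_wrt G X1 f1"
  shows "stable_wrt G X2 f2 \<and>
    (\<exists>C0 :: real. C0 \<ge> 1 \<and>
      (\<forall>x :: real. x \<ge> 1 \<longrightarrow>
        (is_iso G X1 f1 \<longrightarrow> stab_fun G X2 f2 x \<le> C0 * x) \<and>
        (\<not> is_iso G X1 f1 \<longrightarrow> stab_fun G X2 f2 x \<le> C0 * stab_fun G X1 f1 (C0 * x))))"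
proof -
  have G: "group G" and fin1: "finite X1" and fin2: "finite X2" and st1: "stable_wrt G X1 f1"
    using assms by auto
  have c1: "f1 ` X1 \<subseteq> carrier G" and epi1: "\<forall>g \<in> carrier G. \<exists>v \<in> free_elems X1. word_eval G f1 v = g"
    using assms(3) by (auto simp: is_epi_def)
  have c2: "f2 ` X2 \<subseteq> carrier G" and epi2: "\<forall>g \<in> carrier G. \<exists>v \<in> free_elems X2. word_eval G f2 v = g"
    using assms(5) by (auto simp: is_epi_def)
  define w where "w x = (SOME v. v \<in> free_elems X2 \<and> word_eval G f2 v = f1 x)" for x
  define u where "u x = (SOME v. v \<in> free_elems X1 \<and> word_eval G f1 v = f2 x)" for x
  have wp: "w x \<in> free_elems X2 \<and> word_eval G f2 (w x) = f1 x" if "x \<in> X1" for x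
  proof -
    have "\<exists>v. v \<in> free_elems X2 \<and> word_eval G f2 v = f1 x" using epi2 c1 that by blast
    from someI_ex[OF this] show ?thesis unfolding w_def .
  qed
  have up: "u x \<in> free_elems X1 \<and> word_eval G f1 (u x) = f2 x" if "x \<in> X2" for x
  proof -
    have "\<exists>v. v \<in> free_elems X1 \<and> word_eval G f1 v = f2 x" using epi1 c2 that by blast
    from someI_ex[OF this] show ?thesis unfolding u_def .
  qed
  interpret S: setting G X1 f1 X2 f2 w u
    unfolding setting_def using G fin1 fin2 c1 c2 wp up by blast
  have aux2: "\<And>a b :: real. 0 < a \<Longrightarrow> a * (b / (2 * a)) = b / 2" by simp
  have stab2: "stable_wrt G X2 f2"
    unfolding stable_wrt_def
  proof (intro allI impI)
    fix \<epsilon> :: real assume e: "0 < \<epsilon>"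
    define \<epsilon>1 where "\<epsilon>1 = \<epsilon> / (2 * (real S.M + 1))"
    have e1: "0 < \<epsilon>1" unfolding \<epsilon>1_def using e by simp
    have "real S.M * \<epsilon>1 \<le> (real S.M + 1) * \<epsilon>1" using e1 by simp
    also have "\<dots> = \<epsilon> / 2" unfolding \<epsilon>1_def
      using aux2[of "real S.M + 1" \<epsilon>] by simp
    finally have Me: "real S.M * \<epsilon>1 \<le> \<epsilon> / 2" .
    obtain \<delta> E1 where "valid_pair G X1 f1 \<epsilon>1 \<delta> E1" using st1 e1 unfolding stable_wrt_def by blast
    then show "\<exists>\<delta> E. valid_pair G X2 f2 \<epsilon> \<delta> E" using S.transfer[OF _ e Me e1] by blast
  qed
  have bdd: "bdd_below {real (word_norm E) / \<delta> | \<delta> E. valid_pair G X2 f2 e \<delta> E}" for e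
    by (rule bdd_belowI[of _ 0]) (auto simp: valid_pair_def)
  have stab_le: "stab_fun G X2 f2 x \<le> real (word_norm E) / \<delta>"
    if "valid_pair G X2 f2 (1 / x) \<delta> E" for x \<delta> E
    unfolding stab_fun_def by (rule cInf_lower[OF _ bdd]) (use that in blast)
  show ?thesis
  proof (cases "is_iso G X1 f1")
    case True
    define C0 where "C0 = 2 * real S.K + 1"
    have "stab_fun G X2 f2 x \<le> C0 * x" if x: "1 \<le> x" for x :: real
    proof -
      have x0: "0 < x" using x by simp
      define \<epsilon>1 where "\<epsilon>1 = (1 / x) / (2 * (real S.M + 1))"
      have e1: "0 < \<epsilon>1" unfolding \<epsilon>1_def using x0 by simp
      have "real S.M * \<epsilon>1 \<le> (real S.M + 1) * \<epsilon>1" using e1 by simp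
      also have "\<dots> = (1 / x) / 2" unfolding \<epsilon>1_def
        using aux2[of "real S.M + 1" "1 / x"] by simp
      finally have Me: "real S.M * \<epsilon>1 \<le> (1 / x) / 2" .
      have V: "valid_pair G X1 f1 \<epsilon>1 1 {}" by (rule iso_valid[OF G True e1])
      have V2: "valid_pair G X2 f2 (1 / x) (min 1 ((1 / x) / 2)) (S.E2 {})"
        by (rule S.transfer[OF V _ Me e1]) (use x0 in simp)
      have mn: "min 1 ((1 / x) / 2) = 1 / (2 * x)" using x by (simp add: min_def field_simps)
      have nrm: "word_norm (S.E2 {}) \<le> S.K" using S.E2_norm[of "{}"] by (simp add: word_norm_def)
      have "stab_fun G X2 f2 x \<le> real (word_norm (S.E2 {})) / (1 / (2 * x))"
        using stab_le V2 mn by metis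
      also have "\<dots> = 2 * x * real (word_norm (S.E2 {}))" by simp
      also have "\<dots> \<le> 2 * x * real S.K" using nrm x0 by simp
      also have "\<dots> \<le> C0 * x" unfolding C0_def using x0 by (simp add: field_simps)
      finally show ?thesis .
    qed
    moreover have "1 \<le> C0" unfolding C0_def by simp
    ultimately show ?thesis using stab2 True by (intro conjI exI[of _ C0]) auto
  next
    case False
    obtain w0 where w0: "w0 \<in> free_elems X1" "word_eval G f1 w0 = \<one>\<^bsub>G\<^esub>" "w0 \<noteq> []"
      using False assms(3) unfolding is_iso_def by auto
    define n where "n = real (length w0)"
    have n0: "0 \<le> n" unfolding n_def by simp
    define C0 where "C0 = 4 * (n + 1) + 2 * real S.M + real S.L + real S.K + 1"
    have C0: "1 \<le> C0" "4 * (n + 1) \<le> C0" "2 * real S.M \<le> C0" "real S.L + real S.K \<le> C0"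
      unfolding C0_def using n0 by auto
    have main: "stab_fun G X2 f2 x \<le> C0 * stab_fun G X1 f1 (C0 * x)" if x: "1 \<le> x" for x :: real
    proof -
      have x0: "0 < x" using x by simp
      have C0x: "C0 \<le> C0 * x" using C0(1) x by simp
      have pos: "0 < C0 * x" using C0(1) x0 by simp
      have ehalf: "((1 / x) / 2) * (C0 * x) = C0 / 2" using x0 by (simp add: field_simps)
      define \<epsilon>1 where "\<epsilon>1 = 1 / (C0 * x)"
      have e1: "0 < \<epsilon>1" unfolding \<epsilon>1_def using x0 C0(1) by simp
      define S1 where "S1 = {real (word_norm E) / \<delta> | \<delta> E. valid_pair G X1 f1 \<epsilon>1 \<delta> E}"
      have ne: "S1 \<noteq> {}" using st1 e1 unfolding stable_wrt_def S1_def by blast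
      have "stab_fun G X2 f2 x / C0 \<le> q" if "q \<in> S1" for q
      proof -
        obtain \<delta> E1 where q: "q = real (word_norm E1) / \<delta>" and V: "valid_pair G X1 f1 \<epsilon>1 \<delta> E1"
          using \<open>q \<in> S1\<close> unfolding S1_def by blast
        have d0: "0 < \<delta>" using V by (simp add: valid_pair_def)
        have "\<epsilon>1 * (2 * (n + 1)) = 2 * (n + 1) / (C0 * x)" unfolding \<epsilon>1_def by simp
        also have "\<dots> \<le> 1"
        proof -
          have h: "2 * (n + 1) \<le> C0 * x" using C0(2) C0x n0 by argo
          then show ?thesis by (simp add: pos_divide_le_eq[OF pos])
        qed
        finally have small: "\<epsilon>1 * (2 * (real (length w0) + 1)) \<le> 1" unfolding n_def .
        have fc: "\<forall>x \<in> X1. f1 x \<in> carrier G" using c1 by auto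
        from lower[OF G fc w0(1) w0(3) w0(2) V e1 small]
        have dl: "\<delta> < 2 * (n + 1) * \<epsilon>1" and nE: "1 \<le> word_norm E1" unfolding n_def by auto
        have "real S.M * \<epsilon>1 = real S.M / (C0 * x)" unfolding \<epsilon>1_def by simp
        also have "\<dots> \<le> (1 / x) / 2"
          using C0(3) ehalf by (simp add: pos_divide_le_eq[OF pos])
        finally have Me: "real S.M * \<epsilon>1 \<le> (1 / x) / 2" .
        have V2: "valid_pair G X2 f2 (1 / x) (min \<delta> ((1 / x) / 2)) (S.E2 E1)"
          by (rule S.transfer[OF V _ Me e1]) (use x0 in simp)
        have "2 * (n + 1) * \<epsilon>1 = 2 * (n + 1) / (C0 * x)" unfolding \<epsilon>1_def by simp
        also have "\<dots> \<le> (1 / x) / 2"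
        proof -
          have "2 * (n + 1) \<le> C0 / 2" using C0(2) by argo
          then show ?thesis using ehalf by (simp add: pos_divide_le_eq[OF pos])
        qed
        finally have "\<delta> \<le> (1 / x) / 2" using dl by simp
        then have mn: "min \<delta> ((1 / x) / 2) = \<delta>" by simp
        have fE: "finite E1" "E1 \<subseteq> free_elems X1" using V by (auto simp: valid_pair_def ker_free_def)
        have "word_norm (S.E2 E1) \<le> S.L * word_norm E1 + S.K" by (rule S.E2_norm[OF fE])
        also have "\<dots> \<le> S.L * word_norm E1 + S.K * word_norm E1" using nE by simp
        finally have nrm: "real (word_norm (S.E2 E1)) \<le> (real S.L + real S.K) * real (word_norm E1)"
          by (simp add: algebra_simps flip: of_nat_mult of_nat_add)
        have "stab_fun G X2 f2 x \<le> real (word_norm (S.E2 E1)) / \<delta>"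
          using stab_le V2 mn by metis
        also have "\<dots> \<le> (real S.L + real S.K) * real (word_norm E1) / \<delta>"
          using nrm d0 by (simp add: divide_right_mono)
        also have "\<dots> \<le> C0 * real (word_norm E1) / \<delta>"
          using C0(4) d0 by (simp add: divide_right_mono mult_right_mono)
        finally have "stab_fun G X2 f2 x \<le> C0 * q" unfolding q by simp
        then show ?thesis using C0(1) by (simp add: field_simps)
      qed
      then have "stab_fun G X2 f2 x / C0 \<le> Inf S1" by (intro cInf_greatest ne) auto
      moreover have "stab_fun G X1 f1 (C0 * x) = Inf S1" unfolding stab_fun_def S1_def \<epsilon>1_def ..
      ultimately show ?thesis using C0(1) by (simp add: field_simps)
    qed
    show ?thesis using stab2 False main C0(1) by (intro conjI exI[of _ C0]) auto
  qed
qed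

end
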